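(* Let $u(t)=\sum_{i=1}^M s_i(t)e^{j2\pi f_it}$ be a signal in the class $\mathcal{M}_2$ described in the context, observed by the L-shaped array described in the context with $N$ sensors along each axis and spacing $d$. Define $\mathbf{R}_1=\mathbb{E}[\mathbf{x}_1\mathbf{z}_1^H]$, $\mathbf{R}_2=\mathbb{E}[\mathbf{x}_2\mathbf{z}_1^H]$, $\mathbf{R}_3=\mathbb{E}[\mathbf{x}_1\mathbf{z}_2^H]$ and $\mathbf{R}=[\mathbf{R}_1^T\ \mathbf{R}_2^T\ \mathbf{R}_3^T]^T\in\mathbb{C}^{3(N-1)\times(N-1)}$, and let $\mathbf{U}_1\in\mathbb{C}^{3(N-1)\times M}$ be the matrix of left singular vectors of $\mathbf{R}$ corresponding to its $M$ largest singular values. If (c1) $d\le\frac{c}{f_{\text{Nyq}}}$ and (c2) $N>M$, then there exists an invertible $M\times M$ matrix $\mathbf{T}$ such that $$\mathbf{U}_1=\begin{bmatrix}\mathbf{A}_{x_1}\\ \mathbf{A}_{x_1}\boldsymbol{\Phi}\\ \mathbf{A}_{x_1}\boldsymbol{\Psi}^H\end{bmatrix}\mathbf{T}.$$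
   Context: Class $\mathcal{M}_2$: $u$ is complex valued with Fourier transform supported in $[-f_{\text{Nyq}}/2,f_{\text{Nyq}}/2]$, each $s_i$ has Fourier transform supported in $[-B/2,B/2]$, $\min_{i\neq j}|f_i-f_j|>B$; the $s_i$ are wide-sense stationary, zero mean, mutually uncorrelated, with $\mathbb{E}[|s_i(t)|^2]\neq 0$; transmission $i$ lies in the $xz$-plane with unknown angle of arrival $\theta_i$, $|\theta_i|<90^\circ$ (measured from the positive $x$ axis), and the electronic angles are distinct: $f_i\cos\theta_i\neq f_j\cos\theta_j$ and $f_i\sin\theta_i\neq f_j\sin\theta_j$ for $i\neq j$. $c>0$ is the propagation speed. L-shaped array: two orthogonal uniform linear arrays (along $x$ and $z$), $N$ sensors each with a common sensor at the origin, spacing $d$; every sensor multiplies its received signal by the same periodic function $p(t)$, low-pass filters and samples at rate $f_s$. With $\tau_n^x(\theta)=\frac{dn}{c}\cos\theta$, $\tau_n^z(\theta)=\frac{dn}{c}\sin\theta$, the samples satisfy $\mathbf{x}[k]=\mathbf{A}_x\mathbf{w}[k]$, $\mathbf{z}[k]=\mathbf{A}_z\mathbf{w}[k]$, where $(\mathbf{A}_x)_{n,i}=e^{j2\pi f_i\tau_n^x(\theta_i)}$, $(\mathbf{A}_z)_{n,i}=e^{j2\pi f_i\tau_n^z(\theta_i)}$, $n=1,\dots,N$, and $\mathbf{w}[k]\in\mathbb{C}^M$ has entries $w_i[k]=\tilde s_i(k/f_s)$ ($\tilde s_i$ the filtered version of $s_i(t)e^{j2\pi f_it}p(t)$); $\mathbf{R}_w=\mathbb{E}[\mathbf{w}\mathbf{w}^H]$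 is diagonal with nonzero diagonal entries. $\mathbf{x}_1,\mathbf{A}_{x_1}$ (resp. $\mathbf{x}_2,\mathbf{A}_{x_2}$) are the first (resp. last) $N-1$ rows of $\mathbf{x},\mathbf{A}_x$; likewise $\mathbf{z}_1,\mathbf{z}_2,\mathbf{A}_{z_1},\mathbf{A}_{z_2}$. $\boldsymbol{\Phi}=\mathrm{diag}(e^{j2\pi f_i\tau_1^x(\theta_i)})_{i=1}^M$, $\boldsymbol{\Psi}=\mathrm{diag}(e^{j2\pi f_i\tau_1^z(\theta_i)})_{i=1}^M$, so $\mathbf{A}_{x_2}=\mathbf{A}_{x_1}\boldsymbol{\Phi}$, $\mathbf{A}_{z_2}=\mathbf{A}_{z_1}\boldsymbol{\Psi}$. *)

theory Defs
  imports "HOL-Probability.Probability" "Jordan_Normal_Form.Matrix"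
begin

text \<open>Conventions: transmissions are indexed i = 0..M-1 (paper: 1..M); array rows
  r = 0..N-1 correspond to sensor n = r+1 (paper: n = 1..N).  Angles are in radians.\<close>

definition tau_x :: "real \<Rightarrow> real \<Rightarrow> nat \<Rightarrow> real \<Rightarrow> real" where
  "tau_x d c n \<theta> = d * real n / c * cos \<theta>"

definition tau_z :: "real \<Rightarrow> real \<Rightarrow> nat \<Rightarrow> real \<Rightarrow> real" where
  "tau_z d c n \<theta> = d * real n / c * sin \<theta>"

definition steer_x :: "nat \<Rightarrow> nat \<Rightarrow> real \<Rightarrow> real \<Rightarrow> (nat \<Rightarrow> real) \<Rightarrow> (nat \<Rightarrow> real) \<Rightarrow> complex mat" where
  "steer_x N M d c f \<theta> = mat N M (\<lambda>(r, i).
      exp (\<i> * complex_of_real (2 * pi * f i * tau_x d c (r + 1) (\<theta> i))))"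

definition steer_z :: "nat \<Rightarrow> nat \<Rightarrow> real \<Rightarrow> real \<Rightarrow> (nat \<Rightarrow> real) \<Rightarrow> (nat \<Rightarrow> real) \<Rightarrow> complex mat" where
  "steer_z N M d c f \<theta> = mat N M (\<lambda>(r, i).
      exp (\<i> * complex_of_real (2 * pi * f i * tau_z d c (r + 1) (\<theta> i))))"

definition first_rows :: "'a mat \<Rightarrow> 'a mat" where
  "first_rows A = mat (dim_row A - 1) (dim_col A) (\<lambda>(r, i). A $$ (r, i))"

definition last_rows :: "'a mat \<Rightarrow> 'a mat" where
  "last_rows A = mat (dim_row A - 1) (dim_col A) (\<lambda>(r, i). A $$ (r + 1, i))"

definition first_entries :: "'a vec \<Rightarrow> 'a vec" where
  "first_entries v = vec (dim_vec v - 1) (\<lambda>r. v $ r)"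

definition last_entries :: "'a vec \<Rightarrow> 'a vec" where
  "last_entries v = vec (dim_vec v - 1) (\<lambda>r. v $ (r + 1))"

definition Phi_mat :: "nat \<Rightarrow> real \<Rightarrow> real \<Rightarrow> (nat \<Rightarrow> real) \<Rightarrow> (nat \<Rightarrow> real) \<Rightarrow> complex mat" where
  "Phi_mat M d c f \<theta> = mat M M (\<lambda>(i, k). if i = k then
      exp (\<i> * complex_of_real (2 * pi * f i * tau_x d c 1 (\<theta> i))) else 0)"

definition Psi_mat :: "nat \<Rightarrow> real \<Rightarrow> real \<Rightarrow> (nat \<Rightarrow> real) \<Rightarrow> (nat \<Rightarrow> real) \<Rightarrow> complex mat" where
  "Psi_mat M d c f \<theta> = mat M M (\<lambda>(i, k). if i = k then
      exp (\<i> * complex_of_real (2 * pi * f i * tau_z d c 1 (\<theta> i))) else 0)"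

definition adj :: "complex mat \<Rightarrow> complex mat" (\<open>_\<^sup>H\<close> [1000] 1000) where
  "A\<^sup>H = mat (dim_col A) (dim_row A) (\<lambda>(i, j). cnj (A $$ (j, i)))"

definition xcorr :: "'w measure \<Rightarrow> nat \<Rightarrow> nat \<Rightarrow> ('w \<Rightarrow> complex vec) \<Rightarrow> ('w \<Rightarrow> complex vec) \<Rightarrow> complex mat" where
  "xcorr P m n X Y = mat m n (\<lambda>(a, b). integral\<^sup>L P (\<lambda>\<omega>. X \<omega> $ a * cnj (Y \<omega> $ b)))"

definition is_svd :: "complex mat \<Rightarrow> complex mat \<Rightarrow> complex mat \<Rightarrow> complex mat \<Rightarrow> bool" where
  "is_svd R U S V \<longleftrightarrow>
     (let m = dim_row R; n = dim_col R in
      U \<in> carrier_mat m m \<and> V \<in> carrier_mat n n \<and> S \<in> carrier_mat m n \<and>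
      U\<^sup>H * U = 1\<^sub>m m \<and> V\<^sup>H * V = 1\<^sub>m n \<and>
      (\<forall>i<m. \<forall>j<n. i \<noteq> j \<longrightarrow> S $$ (i, j) = 0) \<and>
      (\<forall>i<min m n. Im (S $$ (i, i)) = 0 \<and> 0 \<le> Re (S $$ (i, i))) \<and>
      (\<forall>i j. i \<le> j \<longrightarrow> j < min m n \<longrightarrow> Re (S $$ (j, j)) \<le> Re (S $$ (i, i))) \<and>
      R = U * S * V\<^sup>H)"

definition leading_left_singular_vectors :: "complex mat \<Rightarrow> nat \<Rightarrow> complex mat \<Rightarrow> bool" where
  "leading_left_singular_vectors R k U1 \<longleftrightarrow>
     (\<exists>U S V. is_svd R U S V \<and> U1 = mat (dim_row R) k (\<lambda>(i, j). U $$ (i, j)))"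

end

theory Submission imports Defs "Jordan_Normal_Form.Determinant" "HOL-Computational_Algebra.Polynomial" begin

lemma det_mult_low:
  fixes A B :: "complex mat"
  assumes A: "A \<in> carrier_mat n k" and B: "B \<in> carrier_mat k n" and kn: "k < n"
  shows "Determinant.det (A * B) = 0"
proof -
  define A' where "A' = mat n n (\<lambda>(i,j). if j < k then A $$ (i,j) else 0)"
  define B' where "B' = mat n n (\<lambda>(i,j). if i < k then B $$ (i,j) else 0)"
  have AB: "A * B = A' * B'"
  proof (rule eq_matI)
    fix i j assume i: "i < dim_row (A'*B')" and j: "j < dim_col (A'*B')"
    hence ij: "i<n" "j<n" by (auto simp: A'_def B'_def)
    have "(A' * B') $$ (i,j) = (\<Sum>l\<in>{0..<n}. A' $$ (i,l) * B' $$ (l,j))"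
      using ij by (simp add: A'_def B'_def scalar_prod_def)
    also have "\<dots> = (\<Sum>l\<in>{0..<k}. A $$ (i,l) * B $$ (l,j))"
      using kn ij by (intro sum.mono_neutral_cong_right) (auto simp: A'_def B'_def)
    also have "\<dots> = (A*B) $$ (i,j)" using A B ij by (simp add: scalar_prod_def)
    finally show "(A*B) $$ (i,j) = (A'*B') $$ (i,j)" by simp
  qed (use A B in \<open>auto simp: A'_def B'_def\<close>)
  have A'c: "A' \<in> carrier_mat n n" and B'c: "B' \<in> carrier_mat n n" by (auto simp: A'_def B'_def)
  have "A' *\<^sub>v unit_vec n (n-1) = 0\<^sub>v n"
  proof (rule eq_vecI)
    fix i assume "i < dim_vec (0\<^sub>v n :: complex vec)"
    hence i: "i < n" by simp
    have "(A' *\<^sub>v unit_vec n (n-1)) $ i = (\<Sum>l\<in>{0..<n}. A' $$ (i,l) * unit_vec n (n-1) $ l)"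
      using i by (simp add: A'_def scalar_prod_def)
    also have "\<dots> = 0"
      using kn i by (intro sum.neutral) (auto simp: A'_def unit_vec_def)
    finally show "(A' *\<^sub>v unit_vec n (n-1)) $ i = 0\<^sub>v n $ i" using i by simp
  qed (simp add: A'_def)
  hence "Determinant.det A' = 0"
    using kn by (subst det_0_iff_vec_prod_zero_field[OF A'c]) (intro exI[of _ "unit_vec n (n-1)"], auto)
  thus ?thesis using AB det_mult[OF A'c B'c] by simp
qed

lemma append_rows_mult:
  fixes A B C :: "'a :: semiring_0 mat"
  assumes A: "A \<in> carrier_mat n1 k" and B: "B \<in> carrier_mat n2 k" and C: "C \<in> carrier_mat k p"
  shows "(A @\<^sub>r B) * C = (A * C) @\<^sub>r (B * C)"
proof (rule eq_matI)
  fix i j assume "i < dim_row ((A * C) @\<^sub>r (B * C))" "j < dim_col ((A * C) @\<^sub>r (B * C))"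
  hence ij: "i < n1 + n2" "j < p" using A B C by (auto simp: append_rows_def)
  have r: "row (A @\<^sub>r B) i = (if i < n1 then row A i else row B (i - n1))"
    using A B ij by (intro eq_vecI) (auto simp: append_rows_def)
  have AB: "A @\<^sub>r B \<in> carrier_mat (n1+n2) k" using A B by auto
  have "((A @\<^sub>r B) * C) $$ (i, j) = row (A @\<^sub>r B) i \<bullet> col C j"
    using AB C ij by simp
  also have "\<dots> = ((A * C) @\<^sub>r (B * C)) $$ (i, j)"
    unfolding r using A B C ij by (auto simp: append_rows_def)
  finally show "((A @\<^sub>r B) * C) $$ (i, j) = ((A * C) @\<^sub>r (B * C)) $$ (i, j)" .
qed (use A B C in \<open>auto simp: append_rows_def\<close>)

lemma adj_carrier: "A \<in> carrier_mat a b \<Longrightarrow> A\<^sup>H \<in> carrier_mat b a"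
  by (auto simp: adj_def)

lemma svd_colspace:
  fixes R G Q U S V U1 :: "complex mat"
  assumes G: "G \<in> carrier_mat m M" and Q: "Q \<in> carrier_mat M n" and RGQ: "R = G * Q"
    and Mn: "M \<le> n" and nm: "n \<le> m"
    and detG: "Determinant.det (mat M M (\<lambda>(i,j). G $$ (i,j))) \<noteq> 0"
    and detQ: "Determinant.det (mat M M (\<lambda>(i,j). Q $$ (i,j))) \<noteq> 0"
    and svd: "is_svd R U S V" and U1: "U1 = mat m M (\<lambda>(i,j). U $$ (i,j))"
  shows "\<exists>T. T \<in> carrier_mat M M \<and> invertible_mat T \<and> U1 = G * T"
proof -
  have R: "R \<in> carrier_mat m n" using G Q RGQ by simp
  hence dR: "dim_row R = m" "dim_col R = n" by auto
  have Uc: "U \<in> carrier_mat m m" and Vc: "V \<in> carrier_mat n n" and Sc: "S \<in> carrier_mat m n"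
    and UU: "U\<^sup>H * U = 1\<^sub>m m" and VV: "V\<^sup>H * V = 1\<^sub>m n"
    and Soff: "\<forall>i<m. \<forall>j<n. i \<noteq> j \<longrightarrow> S $$ (i, j) = 0"
    and Spos: "\<forall>i<min m n. Im (S $$ (i, i)) = 0 \<and> 0 \<le> Re (S $$ (i, i))"
    and Smono: "\<forall>i j. i \<le> j \<longrightarrow> j < min m n \<longrightarrow> Re (S $$ (j, j)) \<le> Re (S $$ (i, i))"
    and RUSV: "R = U * S * V\<^sup>H"
    using svd unfolding is_svd_def Let_def dR by auto
  have VHc: "V\<^sup>H \<in> carrier_mat n n" using adj_carrier[OF Vc] .
  have mn: "min m n = n" using nm by simp
  define E1 :: "complex mat" where "E1 = mat M m (\<lambda>(i,j). if i = j then 1 else 0)"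
  define E2 :: "complex mat" where "E2 = mat n M (\<lambda>(i,j). if i = j then 1 else 0)"
  have E1c: "E1 \<in> carrier_mat M m" and E2c: "E2 \<in> carrier_mat n M" by (auto simp: E1_def E2_def)
  have E1G: "E1 * G = mat M M (\<lambda>(i,j). G $$ (i,j))"
  proof (rule eq_matI)
    fix i j assume "i < dim_row (mat M M (\<lambda>(i,j). G $$ (i,j)))" "j < dim_col (mat M M (\<lambda>(i,j). G $$ (i,j)))"
    hence ij: "i < M" "j < M" by auto
    have "(E1 * G) $$ (i,j) = (\<Sum>l\<in>{0..<m}. (if i = l then 1 else 0) * G $$ (l,j))"
      using ij E1c G by (simp add: E1_def scalar_prod_def)
    also have "\<dots> = (\<Sum>l\<in>{0..<m}. if l = i then G $$ (i,j) else 0)" by (intro sum.cong) auto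
    also have "\<dots> = G $$ (i,j)" using ij Mn nm by simp
    finally show "(E1 * G) $$ (i,j) = mat M M (\<lambda>(i,j). G $$ (i,j)) $$ (i,j)" using ij by simp
  qed (use E1c G in auto)
  have QE2: "Q * E2 = mat M M (\<lambda>(i,j). Q $$ (i,j))"
  proof (rule eq_matI)
    fix i j assume "i < dim_row (mat M M (\<lambda>(i,j). Q $$ (i,j)))" "j < dim_col (mat M M (\<lambda>(i,j). Q $$ (i,j)))"
    hence ij: "i < M" "j < M" by auto
    have "(Q * E2) $$ (i,j) = (\<Sum>l\<in>{0..<n}. Q $$ (i,l) * (if l = j then 1 else 0))"
      using ij E2c Q by (simp add: E2_def scalar_prod_def)
    also have "\<dots> = (\<Sum>l\<in>{0..<n}. if l = j then Q $$ (i,j) else 0)" by (intro sum.cong) auto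
    also have "\<dots> = Q $$ (i,j)" using ij Mn nm by simp
    finally show "(Q * E2) $$ (i,j) = mat M M (\<lambda>(i,j). Q $$ (i,j)) $$ (i,j)" using ij by simp
  qed (use E2c Q in auto)
  have detE: "Determinant.det (E1 * R * E2) \<noteq> 0"
  proof -
    have e: "E1 * R * E2 = (E1 * G) * (Q * E2)"
      unfolding RGQ using assoc_mult_mat[OF E1c G Q] assoc_mult_mat[OF mult_carrier_mat[OF E1c G] Q E2c] by simp
    have c1: "E1 * G \<in> carrier_mat M M" and c2: "Q * E2 \<in> carrier_mat M M" using E1c G Q E2c by auto
    show ?thesis using e det_mult[OF c1 c2] E1G QE2 detG detQ by auto
  qed
  have Snz: "S $$ (k,k) \<noteq> 0" if k: "k < M" for k
  proof
    assume Sk: "S $$ (k,k) = 0"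
    have Sz: "S $$ (j,j) = 0" if "k \<le> j" "j < n" for j
    proof -
      have "Re (S $$ (j,j)) \<le> Re (S $$ (k,k))" using Smono that mn by auto
      moreover have "Im (S $$ (j,j)) = 0" "0 \<le> Re (S $$ (j,j))" using Spos that mn by auto
      ultimately show ?thesis using Sk by (simp add: complex_eq_iff)
    qed
    define Ek :: "complex mat" where "Ek = mat m k (\<lambda>(i,j). if i = j then 1 else 0)"
    define Fk :: "complex mat" where "Fk = mat k n (\<lambda>(i,j). S $$ (i,j))"
    have Ekc: "Ek \<in> carrier_mat m k" and Fkc: "Fk \<in> carrier_mat k n" by (auto simp: Ek_def Fk_def)
    have SEF: "S = Ek * Fk"
    proof (rule eq_matI)
      fix i j assume "i < dim_row (Ek * Fk)" "j < dim_col (Ek * Fk)"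
      hence ij: "i < m" "j < n" by (auto simp: Ek_def Fk_def)
      have "(Ek * Fk) $$ (i,j) = (\<Sum>l\<in>{0..<k}. (if i = l then 1 else 0) * S $$ (l,j))"
        using ij by (simp add: Ek_def Fk_def scalar_prod_def)
      also have "\<dots> = (\<Sum>l\<in>{0..<k}. if l = i then S $$ (i,j) else 0)" by (intro sum.cong) auto
      also have "\<dots> = (if i < k then S $$ (i,j) else 0)" by simp
      also have "\<dots> = S $$ (i,j)" using Soff Sz ij by (cases "i = j") auto
      finally show "S $$ (i,j) = (Ek * Fk) $$ (i,j)" by simp
    qed (use Sc in \<open>auto simp: Ek_def Fk_def\<close>)
    have "E1 * R * E2 = (E1 * U * Ek) * (Fk * V\<^sup>H * E2)"
    proof -
      have "E1 * (U * (Ek * Fk) * V\<^sup>H) * E2 = E1 * ((U * Ek) * (Fk * V\<^sup>H)) * E2"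
        using assoc_mult_mat[OF Uc Ekc Fkc] assoc_mult_mat[OF mult_carrier_mat[OF Uc Ekc] Fkc VHc] by simp
      also have "\<dots> = ((E1 * (U * Ek)) * (Fk * V\<^sup>H)) * E2"
        using assoc_mult_mat[OF E1c mult_carrier_mat[OF Uc Ekc] mult_carrier_mat[OF Fkc VHc]] by simp
      also have "\<dots> = (E1 * (U * Ek)) * ((Fk * V\<^sup>H) * E2)"
        using assoc_mult_mat[OF mult_carrier_mat[OF E1c mult_carrier_mat[OF Uc Ekc]] mult_carrier_mat[OF Fkc VHc] E2c] by simp
      also have "\<dots> = (E1 * U * Ek) * (Fk * V\<^sup>H * E2)"
        using assoc_mult_mat[OF E1c Uc Ekc] by simp
      finally show ?thesis unfolding RUSV SEF .
    qed
    moreover have "Determinant.det ((E1 * U * Ek) * (Fk * V\<^sup>H * E2)) = 0"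
      by (rule det_mult_low[of _ M k]) (use E1c E2c Uc Ekc Fkc VHc k in auto)
    ultimately show False using detE by simp
  qed
  have RV: "R * V = U * S"
  proof -
    have "R * V = U * S * (V\<^sup>H * V)" unfolding RUSV using assoc_mult_mat[OF mult_carrier_mat[OF Uc Sc] VHc Vc] by simp
    thus ?thesis using VV Uc Sc by simp
  qed
  define T where "T = mat M M (\<lambda>(l,j). (Q * V) $$ (l,j) / S $$ (j,j))"
  have Tc: "T \<in> carrier_mat M M" by (simp add: T_def)
  have U1GT: "U1 = G * T"
  proof (rule eq_matI)
    fix i j assume "i < dim_row (G * T)" "j < dim_col (G * T)"
    hence ij: "i < m" "j < M" using G by (auto simp: T_def)
    have "(G * T) $$ (i,j) = (\<Sum>l\<in>{0..<M}. G $$ (i,l) * ((Q * V) $$ (l,j) / S $$ (j,j)))"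
      using ij G Q Vc by (simp add: T_def scalar_prod_def)
    also have "\<dots> = (\<Sum>l\<in>{0..<M}. G $$ (i,l) * (Q * V) $$ (l,j)) / S $$ (j,j)"
      by (simp add: sum_divide_distrib)
    also have "(\<Sum>l\<in>{0..<M}. G $$ (i,l) * (Q * V) $$ (l,j)) = (G * (Q * V)) $$ (i,j)"
      using ij G Q Vc Mn by (simp add: scalar_prod_def)
    also have "G * (Q * V) = U * S" using G Q Vc RGQ RV by simp
    also have "(U * S) $$ (i,j) = (\<Sum>l\<in>{0..<m}. U $$ (i,l) * S $$ (l,j))"
      using ij Uc Sc Mn by (simp add: scalar_prod_def)
    also have "\<dots> = (\<Sum>l\<in>{0..<m}. if l = j then U $$ (i,j) * S $$ (j,j) else 0)"
      using Soff ij Mn nm by (intro sum.cong) auto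
    also have "\<dots> = U $$ (i,j) * S $$ (j,j)" using ij Mn nm by simp
    finally have "(G * T) $$ (i,j) = U $$ (i,j)" using Snz[OF ij(2)] by (simp add: RV)
    thus "U1 $$ (i,j) = (G * T) $$ (i,j)" using ij U1 by simp
  qed (use G U1 in \<open>auto simp: T_def\<close>)
  have U1c: "U1 \<in> carrier_mat m M" using U1 by simp
  have U1U1: "U1\<^sup>H * U1 = 1\<^sub>m M"
  proof (rule eq_matI)
    fix i j assume "i < dim_row (1\<^sub>m M :: complex mat)" "j < dim_col (1\<^sub>m M :: complex mat)"
    hence ij: "i < M" "j < M" by auto
    have "(U1\<^sup>H * U1) $$ (i,j) = (\<Sum>l\<in>{0..<m}. cnj (U $$ (l,i)) * U $$ (l,j))"
      using ij U1 Mn nm by (simp add: adj_def scalar_prod_def)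
    also have "\<dots> = (U\<^sup>H * U) $$ (i,j)" using ij Uc Mn nm by (simp add: adj_def scalar_prod_def)
    also have "\<dots> = 1\<^sub>m M $$ (i,j)" using UU ij Mn nm by simp
    finally show "(U1\<^sup>H * U1) $$ (i,j) = 1\<^sub>m M $$ (i,j)" .
  qed (use U1 in \<open>auto simp: adj_def\<close>)
  define L where "L = U1\<^sup>H * G"
  have Lc: "L \<in> carrier_mat M M" using adj_carrier[OF U1c] G by (simp add: L_def)
  have LT: "L * T = 1\<^sub>m M" unfolding L_def using adj_carrier[OF U1c] G Tc U1GT U1U1
    using assoc_mult_mat[OF adj_carrier[OF U1c] G Tc] by simp
  have TL: "T * L = 1\<^sub>m M" by (rule mat_mult_left_right_inverse[OF Lc Tc LT])
  have "invertible_mat T"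
    unfolding invertible_mat_def inverts_mat_def square_mat.simps using Tc Lc LT TL by auto
  thus ?thesis using Tc U1GT by blast
qed

lemma vandermonde_det_nz:
  fixes z D :: "nat \<Rightarrow> complex"
  assumes inj: "inj_on z {..<M}" and znz: "\<forall>j<M. z j \<noteq> 0" and Dnz: "\<forall>j<M. D j \<noteq> 0"
  shows "Determinant.det (mat M M (\<lambda>(i,j). D j * z j ^ (i+1))) \<noteq> 0"
proof
  define A where "A = mat M M (\<lambda>(i,j). D j * z j ^ (i+1))"
  assume "Determinant.det (mat M M (\<lambda>(i,j). D j * z j ^ (i+1))) = 0"
  have Ac: "A \<in> carrier_mat M M" by (simp add: A_def)
  hence "Determinant.det (transpose_mat A) = 0"
    using det_transpose[OF Ac] \<open>Determinant.det (mat M M (\<lambda>(i,j). D j * z j ^ (i+1))) = 0\<close>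
    by (simp add: A_def)
  then obtain v where v: "v \<in> carrier_vec M" "v \<noteq> 0\<^sub>v M" "transpose_mat A *\<^sub>v v = 0\<^sub>v M"
    using det_0_iff_vec_prod_zero_field[of "transpose_mat A" M] by (auto simp: A_def)
  define p where "p = (\<Sum>i<M. monom (v $ i) i)"
  have coeffp: "coeff p k = (if k < M then v $ k else 0)" for k
    by (simp add: p_def coeff_sum coeff_monom)
  have root: "poly p (z j) = 0" if j: "j < M" for j
  proof -
    have "(transpose_mat A *\<^sub>v v) $ j = 0" using v(3) j by simp
    moreover have "(transpose_mat A *\<^sub>v v) $ j = (\<Sum>i\<in>{0..<M}. D j * z j ^ (i+1) * v $ i)"
      using j v(1) by (simp add: A_def scalar_prod_def)
    moreover have "(\<Sum>i\<in>{0..<M}. D j * z j ^ (i+1) * v $ i) = D j * z j * poly p (z j)"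
      by (simp add: p_def poly_sum poly_monom sum_distrib_left atLeast0LessThan algebra_simps)
    ultimately show ?thesis using Dnz znz j by simp
  qed
  have "p = 0"
  proof (rule ccontr)
    assume pnz: "p \<noteq> 0"
    have "degree p \<le> M - 1" by (rule degree_le) (auto simp: coeffp)
    moreover have "card (z ` {..<M}) \<le> card {x. poly p x = 0}"
      using root by (intro card_mono poly_roots_finite[OF pnz]) auto
    moreover have "card (z ` {..<M}) = M" using inj by (simp add: card_image)
    moreover have "card {x. poly p x = 0} \<le> degree p" by (rule card_poly_roots_bound[OF pnz])
    moreover have "M > 0" using pnz by (cases M) (auto simp: p_def)
    ultimately show False by linarith
  qed
  have "v = 0\<^sub>v M"
  proof (rule eq_vecI)
    fix i assume "i < dim_vec (0\<^sub>v M :: complex vec)"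
    hence i: "i < M" by simp
    have "v $ i = coeff p i" using coeffp i by simp
    thus "v $ i = 0\<^sub>v M $ i" using \<open>p = 0\<close> i by simp
  qed (use v(1) in auto)
  with v(2) show False by simp
qed

lemma corr_sum:
  fixes w :: "'w \<Rightarrow> nat \<Rightarrow> complex"
  assumes int: "\<forall>i<M. \<forall>j<M. integrable P (\<lambda>\<omega>. w \<omega> i * cnj (w \<omega> j))"
   and diag: "\<forall>i<M. \<forall>j<M. i \<noteq> j \<longrightarrow> integral\<^sup>L P (\<lambda>\<omega>. w \<omega> i * cnj (w \<omega> j)) = 0"
  shows "integral\<^sup>L P (\<lambda>\<omega>. (\<Sum>i<M. a i * w \<omega> i) * cnj (\<Sum>k<M. b k * w \<omega> k))
       = (\<Sum>i<M. a i * cnj (b i) * integral\<^sup>L P (\<lambda>\<omega>. w \<omega> i * cnj (w \<omega> i)))"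
proof -
  have "(\<lambda>\<omega>. (\<Sum>i<M. a i * w \<omega> i) * cnj (\<Sum>k<M. b k * w \<omega> k))
      = (\<lambda>\<omega>. \<Sum>k<M. \<Sum>i<M. (a i * cnj (b k)) * (w \<omega> i * cnj (w \<omega> k)))"
    by (auto simp: sum_distrib_left sum_distrib_right cnj_sum intro!: sum.cong)
  also have "\<dots> = (\<lambda>\<omega>. \<Sum>i<M. \<Sum>k<M. (a i * cnj (b k)) * (w \<omega> i * cnj (w \<omega> k)))"
    by (rule ext, rule sum.swap)
  finally have eq: "(\<lambda>\<omega>. (\<Sum>i<M. a i * w \<omega> i) * cnj (\<Sum>k<M. b k * w \<omega> k))
      = (\<lambda>\<omega>. \<Sum>i<M. \<Sum>k<M. (a i * cnj (b k)) * (w \<omega> i * cnj (w \<omega> k)))" .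
  have "integral\<^sup>L P (\<lambda>\<omega>. \<Sum>i<M. \<Sum>k<M. (a i * cnj (b k)) * (w \<omega> i * cnj (w \<omega> k)))
      = (\<Sum>i<M. integral\<^sup>L P (\<lambda>\<omega>. \<Sum>k<M. (a i * cnj (b k)) * (w \<omega> i * cnj (w \<omega> k))))"
    using int by (intro Bochner_Integration.integral_sum) auto
  also have "\<dots> = (\<Sum>i<M. \<Sum>k<M. (a i * cnj (b k)) * integral\<^sup>L P (\<lambda>\<omega>. w \<omega> i * cnj (w \<omega> k)))"
    using int by (intro sum.cong refl, subst Bochner_Integration.integral_sum) auto
  also have "\<dots> = (\<Sum>i<M. \<Sum>k<M. if k = i then a i * cnj (b i) * integral\<^sup>L P (\<lambda>\<omega>. w \<omega> i * cnj (w \<omega> i)) else 0)"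
    using diag by (intro sum.cong refl) auto
  also have "\<dots> = (\<Sum>i<M. a i * cnj (b i) * integral\<^sup>L P (\<lambda>\<omega>. w \<omega> i * cnj (w \<omega> i)))"
    by simp
  finally show ?thesis unfolding eq .
qed

lemma mv_entry:
  assumes "a < dim_row A" "dim_col A = M"
  shows "(A *\<^sub>v vec M f) $ a = (\<Sum>i<M. A $$ (a,i) * f i)"
  using assms by (simp add: scalar_prod_def atLeast0LessThan)

lemma mult_entry:
  assumes "A \<in> carrier_mat n k" "B \<in> carrier_mat k p" "i < n" "j < p"
  shows "(A * B) $$ (i,j) = (\<Sum>l<k. A $$ (i,l) * B $$ (l,j))"
  using assms by (simp add: scalar_prod_def atLeast0LessThan)

lemma exp_pow_lemma:
  "exp (\<i> * complex_of_real (2 * pi * f * (d * real n / c * cs))) = exp (\<i> * complex_of_real (2 * pi * (f * d / c * cs))) ^ n"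
proof -
  have e: "\<i> * complex_of_real (2 * pi * f * (d * real n / c * cs)) = of_nat n * (\<i> * complex_of_real (2 * pi * (f * d / c * cs)))"
    by (simp add: algebra_simps)
  show ?thesis unfolding e by (rule exp_of_nat_mult)
qed

lemma exp_inj_lemma:
  assumes "exp (\<i> * complex_of_real (2 * pi * a)) = exp (\<i> * complex_of_real (2 * pi * b))"
  shows "\<exists>n::int. a = b + of_int n"
proof -
  obtain n :: int where "\<i> * complex_of_real (2 * pi * a) = \<i> * complex_of_real (2 * pi * b) + complex_of_real (real_of_int (2 * n) * pi) * \<i>"
    using assms exp_eq by blast
  hence "Im (\<i> * complex_of_real (2 * pi * a)) = Im (\<i> * complex_of_real (2 * pi * b) + complex_of_real (real_of_int (2 * n) * pi) * \<i>)"
    by simp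
  hence "2 * pi * a = 2 * pi * b + 2 * real_of_int n * pi" by simp
  hence "2 * pi * a = 2 * pi * (b + of_int n)" by (simp add: algebra_simps)
  hence "a = b + of_int n" using pi_gt_zero by simp
  thus ?thesis by blast
qed

lemma angle_bounds:
  fixes f d c fN th :: real
  assumes c: "c > 0" and d: "d > 0" and fN: "fN > 0" and f: "\<bar>f\<bar> \<le> fN / 2"
    and dc: "d \<le> c / fN" and th: "\<bar>th\<bar> < pi / 2"
  shows "\<bar>f * d / c * cos th\<bar> \<le> 1/2" "\<bar>f * d / c * sin th\<bar> < 1/2"
    "\<bar>f * d / c * cos th\<bar> = 1/2 \<Longrightarrow> sin th = 0"
proof -
  have cpos: "cos th > 0" using th by (intro cos_gt_zero_pi) auto
  have cle: "cos th \<le> 1" by simp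
  have "(sin th)^2 + (cos th)^2 = 1" by simp
  hence s2: "(sin th)^2 < 1" using cpos by (smt (verit) zero_less_power)
  have sle: "\<bar>sin th\<bar> < 1"
    using s2 by (metis abs_le_square_iff abs_one linorder_not_less power_one)
  have fd: "\<bar>f\<bar> * d \<le> c / 2"
  proof -
    have "\<bar>f\<bar> * d \<le> (fN / 2) * (c / fN)" using f dc d by (intro mult_mono) auto
    also have "\<dots> = c / 2" using fN by (simp add: field_simps)
    finally show ?thesis .
  qed
  have fd0: "\<bar>f\<bar> * d \<ge> 0" using d by simp
  have ec: "\<bar>f * d / c * cos th\<bar> = \<bar>f\<bar> * d * cos th / c" using c d cpos by (simp add: abs_mult)
  have es: "\<bar>f * d / c * sin th\<bar> = \<bar>f\<bar> * d * \<bar>sin th\<bar> / c" using c d by (simp add: abs_mult)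
  have x1: "\<bar>f\<bar> * d * cos th \<le> \<bar>f\<bar> * d" using cle fd0 cpos by (simp add: mult_left_le)
  show "\<bar>f * d / c * cos th\<bar> \<le> 1/2" unfolding ec using x1 fd c by (simp add: divide_simps)
  have "\<bar>f\<bar> * d * \<bar>sin th\<bar> \<le> c / 2 * \<bar>sin th\<bar>" by (rule mult_right_mono[OF fd]) simp
  also have "\<dots> < c / 2" using sle c by simp
  finally show "\<bar>f * d / c * sin th\<bar> < 1/2" unfolding es using c by (simp add: divide_simps)
  assume "\<bar>f * d / c * cos th\<bar> = 1/2"
  hence eq: "\<bar>f\<bar> * d * cos th = c / 2" unfolding ec using c by (simp add: divide_simps)
  hence "\<bar>f\<bar> * d = c / 2" using x1 fd by linarith
  hence h: "\<bar>f\<bar> * d * cos th = \<bar>f\<bar> * d * 1" "\<bar>f\<bar> * d \<noteq> 0" using eq c by auto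
  hence "cos th = 1" using mult_left_cancel[OF h(2)] by blast
  thus "sin th = 0" using \<open>(sin th)^2 + (cos th)^2 = 1\<close> by simp
qed

theorem lemma2:
  fixes N M :: nat and d c f_Nyq B :: real and f \<theta> :: "nat \<Rightarrow> real"
    and P :: "'w measure" and w :: "'w \<Rightarrow> nat \<Rightarrow> complex" and U1 :: "complex mat"
  assumes c_pos: "c > 0" and d_pos: "d > 0" and fNyq_pos: "f_Nyq > 0"
    and f_band: "\<forall>i<M. \<bar>f i\<bar> \<le> f_Nyq / 2"
    and f_sep: "\<forall>i<M. \<forall>j<M. i \<noteq> j \<longrightarrow> \<bar>f i - f j\<bar> > B"
    and angles: "\<forall>i<M. \<bar>\<theta> i\<bar> < pi / 2"
    and distinct_x: "\<forall>i<M. \<forall>j<M. i \<noteq> j \<longrightarrow> f i * cos (\<theta> i) \<noteq> f j * cos (\<theta> j)"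
    and distinct_z: "\<forall>i<M. \<forall>j<M. i \<noteq> j \<longrightarrow> f i * sin (\<theta> i) \<noteq> f j * sin (\<theta> j)"
    and prob: "prob_space P"
    and w_int: "\<forall>i<M. \<forall>j<M. integrable P (\<lambda>\<omega>. w \<omega> i * cnj (w \<omega> j))"
    and Rw_diag: "\<forall>i<M. \<forall>j<M. i \<noteq> j \<longrightarrow> integral\<^sup>L P (\<lambda>\<omega>. w \<omega> i * cnj (w \<omega> j)) = 0"
    and Rw_nonzero: "\<forall>i<M. integral\<^sup>L P (\<lambda>\<omega>. w \<omega> i * cnj (w \<omega> i)) \<noteq> 0"
    and c1: "d \<le> c / f_Nyq"
    and c2: "N > M"
    and U1: "leading_left_singular_vectors
       (let Ax = steer_x N M d c f \<theta>; Az = steer_z N M d c f \<theta>;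
            x = (\<lambda>\<omega>. Ax *\<^sub>v vec M (w \<omega>)); z = (\<lambda>\<omega>. Az *\<^sub>v vec M (w \<omega>));
            x1 = (\<lambda>\<omega>. first_entries (x \<omega>)); x2 = (\<lambda>\<omega>. last_entries (x \<omega>));
            z1 = (\<lambda>\<omega>. first_entries (z \<omega>)); z2 = (\<lambda>\<omega>. last_entries (z \<omega>));
            R1 = xcorr P (N - 1) (N - 1) x1 z1;
            R2 = xcorr P (N - 1) (N - 1) x2 z1;
            R3 = xcorr P (N - 1) (N - 1) x1 z2
        in R1 @\<^sub>r R2 @\<^sub>r R3) M U1"
  shows "\<exists>T. T \<in> carrier_mat M M \<and> invertible_mat T \<and>
    U1 = (let Ax1 = first_rows (steer_x N M d c f \<theta>) in
          (Ax1 @\<^sub>r (Ax1 * Phi_mat M d c f \<theta>) @\<^sub>r (Ax1 * (Psi_mat M d c f \<theta>)\<^sup>H)) * T)"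
proof -
  define Ax where "Ax = steer_x N M d c f \<theta>"
  define Az where "Az = steer_z N M d c f \<theta>"
  define zx where "zx = (\<lambda>i. exp (\<i> * complex_of_real (2 * pi * (f i * d / c * cos (\<theta> i)))))"
  define zz where "zz = (\<lambda>i. exp (\<i> * complex_of_real (2 * pi * (f i * d / c * sin (\<theta> i)))))"
  define Dw where "Dw = (\<lambda>i. integral\<^sup>L P (\<lambda>\<omega>. w \<omega> i * cnj (w \<omega> i)))"
  define Ph where "Ph = Phi_mat M d c f \<theta>"
  define Ps where "Ps = Psi_mat M d c f \<theta>"
  have Axc: "Ax \<in> carrier_mat N M" and Azc: "Az \<in> carrier_mat N M"
    by (auto simp: Ax_def Az_def steer_x_def steer_z_def)
  have Phc: "Ph \<in> carrier_mat M M" and Psc: "Ps \<in> carrier_mat M M"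
    by (auto simp: Ph_def Ps_def Phi_mat_def Psi_mat_def)
  have AxE: "Ax $$ (r,i) = zx i ^ (r+1)" if "r < N" "i < M" for r i
  proof -
    have "Ax $$ (r,i) = exp (\<i> * complex_of_real (2 * pi * f i * (d * real (r+1) / c * cos (\<theta> i))))"
      using that by (simp add: Ax_def steer_x_def tau_x_def)
    also have "\<dots> = zx i ^ (r+1)" unfolding zx_def by (rule exp_pow_lemma)
    finally show ?thesis .
  qed
  have AzE: "Az $$ (r,i) = zz i ^ (r+1)" if "r < N" "i < M" for r i
  proof -
    have "Az $$ (r,i) = exp (\<i> * complex_of_real (2 * pi * f i * (d * real (r+1) / c * sin (\<theta> i))))"
      using that by (simp add: Az_def steer_z_def tau_z_def)
    also have "\<dots> = zz i ^ (r+1)" unfolding zz_def by (rule exp_pow_lemma)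
    finally show ?thesis .
  qed
  have PhE: "Ph $$ (i,k) = (if i = k then zx i else 0)" if "i < M" "k < M" for i k
  proof -
    have e: "exp (\<i> * complex_of_real (2 * pi * f j * tau_x d c 1 (\<theta> j))) = zx j" for j
      unfolding tau_x_def zx_def using exp_pow_lemma[of "f j" d 1 c "cos (\<theta> j)"] by simp
    have "Ph $$ (i,k) = (if i = k then exp (\<i> * complex_of_real (2 * pi * f i * tau_x d c 1 (\<theta> i))) else 0)"
      using that by (simp add: Ph_def Phi_mat_def)
    also have "\<dots> = (if i = k then zx i else 0)" unfolding e ..
    finally show ?thesis .
  qed
  have PsE: "Ps $$ (i,k) = (if i = k then zz i else 0)" if "i < M" "k < M" for i k
  proof -
    have e: "exp (\<i> * complex_of_real (2 * pi * f j * tau_z d c 1 (\<theta> j))) = zz j" for j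
      unfolding tau_z_def zz_def using exp_pow_lemma[of "f j" d 1 c "sin (\<theta> j)"] by simp
    have "Ps $$ (i,k) = (if i = k then exp (\<i> * complex_of_real (2 * pi * f i * tau_z d c 1 (\<theta> i))) else 0)"
      using that by (simp add: Ps_def Psi_mat_def)
    also have "\<dots> = (if i = k then zz i else 0)" unfolding e ..
    finally show ?thesis .
  qed
  define A1 where "A1 = first_rows Ax"
  have A1c: "A1 \<in> carrier_mat (N-1) M" using Axc by (auto simp: A1_def first_rows_def)
  have A1E: "A1 $$ (a,i) = zx i ^ (a+1)" if "a < N-1" "i < M" for a i
    using that Axc AxE by (auto simp: A1_def first_rows_def)
  have A2E: "(A1 * Ph) $$ (a,l) = zx l ^ (a+2)" if "a < N-1" "l < M" for a l
  proof -
    have "(A1 * Ph) $$ (a,l) = (\<Sum>k\<in>{0..<M}. A1 $$ (a,k) * Ph $$ (k,l))"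
      using that A1c Phc by (simp add: scalar_prod_def)
    also have "\<dots> = (\<Sum>k\<in>{0..<M}. if k = l then zx l ^ (a+2) else 0)"
      using that by (intro sum.cong refl) (auto simp: A1E PhE)
    also have "\<dots> = zx l ^ (a+2)" using that by simp
    finally show ?thesis .
  qed
  have A3E: "(A1 * Ps\<^sup>H) $$ (a,l) = zx l ^ (a+1) * cnj (zz l)" if "a < N-1" "l < M" for a l
  proof -
    have "(A1 * Ps\<^sup>H) $$ (a,l) = (\<Sum>k\<in>{0..<M}. A1 $$ (a,k) * cnj (Ps $$ (l,k)))"
      using that A1c Psc by (simp add: scalar_prod_def adj_def)
    also have "\<dots> = (\<Sum>k\<in>{0..<M}. if k = l then zx l ^ (a+1) * cnj (zz l) else 0)"
      using that by (intro sum.cong refl) (auto simp: A1E PsE)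
    also have "\<dots> = zx l ^ (a+1) * cnj (zz l)" using that by simp
    finally show ?thesis .
  qed
  define Q where "Q = mat M (N-1) (\<lambda>(i,b). Dw i * cnj (zz i ^ (b+1)))"
  have Qc: "Q \<in> carrier_mat M (N-1)" by (simp add: Q_def)
  define G where "G = A1 @\<^sub>r (A1 * Ph) @\<^sub>r (A1 * Ps\<^sup>H)"
  have Gc: "G \<in> carrier_mat ((N-1) + ((N-1) + (N-1))) M"
    unfolding G_def using A1c Phc adj_carrier[OF Psc] by (intro carrier_append_rows mult_carrier_mat) auto
  have XE: "(Ax *\<^sub>v vec M (w \<omega>)) $ a = (\<Sum>i<M. zx i ^ (a+1) * w \<omega> i)" if "a < N" for a \<omega>
    using that Axc by (subst mv_entry) (auto simp: AxE)
  have ZE: "(Az *\<^sub>v vec M (w \<omega>)) $ a = (\<Sum>i<M. zz i ^ (a+1) * w \<omega> i)" if "a < N" for a \<omega>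
    using that Azc by (subst mv_entry) (auto simp: AzE)
  have corr: "integral\<^sup>L P (\<lambda>\<omega>. (\<Sum>i<M. p i * w \<omega> i) * cnj (\<Sum>k<M. q k * w \<omega> k))
       = (\<Sum>i<M. p i * cnj (q i) * Dw i)" for p q
    unfolding Dw_def by (rule corr_sum[OF w_int Rw_diag])
  have R1eq: "xcorr P (N - 1) (N - 1) (\<lambda>\<omega>. first_entries (Ax *\<^sub>v vec M (w \<omega>))) (\<lambda>\<omega>. first_entries (Az *\<^sub>v vec M (w \<omega>)))
     = A1 * Q"
  proof (rule eq_matI)
    fix a b assume "a < dim_row (A1 * Q)" "b < dim_col (A1 * Q)"
    hence ab: "a < N-1" "b < N-1" using A1c Qc by auto
    have "xcorr P (N - 1) (N - 1) (\<lambda>\<omega>. first_entries (Ax *\<^sub>v vec M (w \<omega>))) (\<lambda>\<omega>. first_entries (Az *\<^sub>v vec M (w \<omega>))) $$ (a,b)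
      = integral\<^sup>L P (\<lambda>\<omega>. (\<Sum>i<M. zx i ^ (a+1) * w \<omega> i) * cnj (\<Sum>k<M. zz k ^ (b+1) * w \<omega> k))"
      using ab Axc Azc by (simp add: xcorr_def first_entries_def XE ZE del: index_mult_mat_vec)
    also have "\<dots> = (\<Sum>i<M. zx i ^ (a+1) * cnj (zz i ^ (b+1)) * Dw i)" by (rule corr)
    also have "\<dots> = (A1 * Q) $$ (a,b)"
      using ab A1c Qc by (simp add: scalar_prod_def atLeast0LessThan A1E Q_def algebra_simps)
    finally show "xcorr P (N - 1) (N - 1) (\<lambda>\<omega>. first_entries (Ax *\<^sub>v vec M (w \<omega>))) (\<lambda>\<omega>. first_entries (Az *\<^sub>v vec M (w \<omega>))) $$ (a,b)
      = (A1 * Q) $$ (a,b)" .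
  qed (use A1c Qc in \<open>auto simp: xcorr_def\<close>)
  have R2eq: "xcorr P (N - 1) (N - 1) (\<lambda>\<omega>. last_entries (Ax *\<^sub>v vec M (w \<omega>))) (\<lambda>\<omega>. first_entries (Az *\<^sub>v vec M (w \<omega>)))
     = (A1 * Ph) * Q"
  proof (rule eq_matI)
    fix a b assume "a < dim_row ((A1 * Ph) * Q)" "b < dim_col ((A1 * Ph) * Q)"
    hence ab: "a < N-1" "b < N-1" using A1c Qc by auto
    have "xcorr P (N - 1) (N - 1) (\<lambda>\<omega>. last_entries (Ax *\<^sub>v vec M (w \<omega>))) (\<lambda>\<omega>. first_entries (Az *\<^sub>v vec M (w \<omega>))) $$ (a,b)
      = integral\<^sup>L P (\<lambda>\<omega>. (\<Sum>i<M. zx i ^ (a+2) * w \<omega> i) * cnj (\<Sum>k<M. zz k ^ (b+1) * w \<omega> k))"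
      using ab Axc Azc by (simp add: xcorr_def first_entries_def last_entries_def XE ZE del: index_mult_mat_vec)
    also have "\<dots> = (\<Sum>i<M. zx i ^ (a+2) * cnj (zz i ^ (b+1)) * Dw i)" by (rule corr)
    also have "\<dots> = (\<Sum>l<M. (A1 * Ph) $$ (a,l) * Q $$ (l,b))"
      using ab by (intro sum.cong refl) (simp add: A2E Q_def algebra_simps)
    also have "\<dots> = ((A1 * Ph) * Q) $$ (a,b)"
      using ab A1c Qc Phc by (intro mult_entry[symmetric]) auto
    finally show "xcorr P (N - 1) (N - 1) (\<lambda>\<omega>. last_entries (Ax *\<^sub>v vec M (w \<omega>))) (\<lambda>\<omega>. first_entries (Az *\<^sub>v vec M (w \<omega>))) $$ (a,b)
      = ((A1 * Ph) * Q) $$ (a,b)" .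
  qed (use A1c Qc in \<open>auto simp: xcorr_def\<close>)
  have R3eq: "xcorr P (N - 1) (N - 1) (\<lambda>\<omega>. first_entries (Ax *\<^sub>v vec M (w \<omega>))) (\<lambda>\<omega>. last_entries (Az *\<^sub>v vec M (w \<omega>)))
     = (A1 * Ps\<^sup>H) * Q"
  proof (rule eq_matI)
    fix a b assume "a < dim_row ((A1 * Ps\<^sup>H) * Q)" "b < dim_col ((A1 * Ps\<^sup>H) * Q)"
    hence ab: "a < N-1" "b < N-1" using A1c Qc by (auto simp: adj_def)
    have "xcorr P (N - 1) (N - 1) (\<lambda>\<omega>. first_entries (Ax *\<^sub>v vec M (w \<omega>))) (\<lambda>\<omega>. last_entries (Az *\<^sub>v vec M (w \<omega>))) $$ (a,b)
      = integral\<^sup>L P (\<lambda>\<omega>. (\<Sum>i<M. zx i ^ (a+1) * w \<omega> i) * cnj (\<Sum>k<M. zz k ^ (b+2) * w \<omega> k))"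
      using ab Axc Azc by (simp add: xcorr_def first_entries_def last_entries_def XE ZE del: index_mult_mat_vec)
    also have "\<dots> = (\<Sum>i<M. zx i ^ (a+1) * cnj (zz i ^ (b+2)) * Dw i)" by (rule corr)
    also have "\<dots> = (\<Sum>l<M. (A1 * Ps\<^sup>H) $$ (a,l) * Q $$ (l,b))"
      using ab by (intro sum.cong refl) (simp add: A3E Q_def algebra_simps)
    also have "\<dots> = ((A1 * Ps\<^sup>H) * Q) $$ (a,b)"
      using ab A1c Qc adj_carrier[OF Psc] by (intro mult_entry[symmetric]) auto
    finally show "xcorr P (N - 1) (N - 1) (\<lambda>\<omega>. first_entries (Ax *\<^sub>v vec M (w \<omega>))) (\<lambda>\<omega>. last_entries (Az *\<^sub>v vec M (w \<omega>))) $$ (a,b)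
      = ((A1 * Ps\<^sup>H) * Q) $$ (a,b)" .
  qed (use A1c Qc in \<open>auto simp: xcorr_def adj_def\<close>)
  have RGQ: "A1 * Q @\<^sub>r (A1 * Ph) * Q @\<^sub>r (A1 * Ps\<^sup>H) * Q = G * Q"
    unfolding G_def using A1c Phc adj_carrier[OF Psc] Qc
    by (simp add: append_rows_mult[of _ "N-1" M _ "N-1 + (N-1)" Q "N-1"] append_rows_mult[of _ "N-1" M _ "N-1" Q "N-1"])
  from U1 have U1': "leading_left_singular_vectors (G * Q) M U1"
    unfolding Let_def Ax_def[symmetric] Az_def[symmetric] R1eq R2eq R3eq RGQ .
  then obtain U S V where svd: "is_svd (G * Q) U S V" and U1eq: "U1 = mat (dim_row (G * Q)) M (\<lambda>(i, j). U $$ (i, j))"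
    unfolding leading_left_singular_vectors_def by blast
  have MN: "M \<le> N - 1" using c2 by simp
  have zx_nz: "\<forall>j<M. zx j \<noteq> 0" by (simp add: zx_def)
  have cz_nz: "\<forall>j<M. cnj (zz j) \<noteq> 0" by (simp add: zz_def)
  have Dw_nz: "\<forall>j<M. Dw j \<noteq> 0" using Rw_nonzero by (simp add: Dw_def)
  have ints: "n = -1 \<or> n = 0 \<or> n = 1" if "\<bar>x\<bar> \<le> 1/2" "\<bar>y\<bar> \<le> 1/2" "x = y + real_of_int n" for x y :: real and n :: int
  proof -
    have "-1 \<le> real_of_int n" "real_of_int n \<le> 1" using that unfolding abs_le_iff by linarith+
    hence "-1 \<le> n" "n \<le> 1" by linarith+
    thus ?thesis by linarith
  qed
  have ints2: "\<bar>x\<bar> = 1/2 \<and> \<bar>y\<bar> = 1/2" if "\<bar>x\<bar> \<le> 1/2" "\<bar>y\<bar> \<le> 1/2" "x = y + real_of_int n" "n = -1 \<or> n = 1" for x y :: real and n :: int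
    using that unfolding abs_le_iff by (auto simp: abs_if)
  have dc: "d / c \<noteq> 0" using d_pos c_pos by simp
  have zx_inj: "inj_on zx {..<M}"
  proof (rule inj_onI, rule ccontr)
    fix i j assume i: "i \<in> {..<M}" and j: "j \<in> {..<M}" and eq: "zx i = zx j" and ij: "i \<noteq> j"
    obtain n :: int where n: "f i * d / c * cos (\<theta> i) = f j * d / c * cos (\<theta> j) + of_int n"
      using exp_inj_lemma[OF eq[unfolded zx_def]] by blast
    have fi: "\<bar>f i\<bar> \<le> f_Nyq / 2" "\<bar>\<theta> i\<bar> < pi / 2" using f_band angles i by auto
    note bi = angle_bounds(1)[OF c_pos d_pos fNyq_pos fi(1) c1 fi(2)] angle_bounds(3)[OF c_pos d_pos fNyq_pos fi(1) c1 fi(2)]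
    have fj: "\<bar>f j\<bar> \<le> f_Nyq / 2" "\<bar>\<theta> j\<bar> < pi / 2" using f_band angles j by auto
    note bj = angle_bounds(1)[OF c_pos d_pos fNyq_pos fj(1) c1 fj(2)] angle_bounds(3)[OF c_pos d_pos fNyq_pos fj(1) c1 fj(2)]
    from ints[OF bi(1) bj(1) n] consider "n = 0" | "n = -1 \<or> n = 1" by blast
    thus False
    proof cases
      case 1
      hence "d / c * (f i * cos (\<theta> i)) = d / c * (f j * cos (\<theta> j))" using n by (simp add: algebra_simps)
      hence "f i * cos (\<theta> i) = f j * cos (\<theta> j)" using dc by simp
      thus False using distinct_x i j ij by auto
    next
      case 2
      have h: "\<bar>f i * d / c * cos (\<theta> i)\<bar> = 1/2" "\<bar>f j * d / c * cos (\<theta> j)\<bar> = 1/2"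
        using ints2[OF bi(1) bj(1) n 2] by blast+
      have "sin (\<theta> i) = 0" "sin (\<theta> j) = 0" using bi(2)[OF h(1)] bj(2)[OF h(2)] by simp_all
      thus False using distinct_z i j ij by auto
    qed
  qed
  have zz_inj: "inj_on zz {..<M}"
  proof (rule inj_onI, rule ccontr)
    fix i j assume i: "i \<in> {..<M}" and j: "j \<in> {..<M}" and eq: "zz i = zz j" and ij: "i \<noteq> j"
    obtain n :: int where n: "f i * d / c * sin (\<theta> i) = f j * d / c * sin (\<theta> j) + of_int n"
      using exp_inj_lemma[OF eq[unfolded zz_def]] by blast
    have fi: "\<bar>f i\<bar> \<le> f_Nyq / 2" "\<bar>\<theta> i\<bar> < pi / 2" using f_band angles i by auto
    note bi = angle_bounds(2)[OF c_pos d_pos fNyq_pos fi(1) c1 fi(2)]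
    have fj: "\<bar>f j\<bar> \<le> f_Nyq / 2" "\<bar>\<theta> j\<bar> < pi / 2" using f_band angles j by auto
    note bj = angle_bounds(2)[OF c_pos d_pos fNyq_pos fj(1) c1 fj(2)]
    have "-1 < real_of_int n" "real_of_int n < 1" using n bi bj unfolding abs_less_iff by linarith+
    hence "n = 0" by linarith
    hence "d / c * (f i * sin (\<theta> i)) = d / c * (f j * sin (\<theta> j))" using n by (simp add: algebra_simps)
    hence "f i * sin (\<theta> i) = f j * sin (\<theta> j)" using dc by simp
    thus False using distinct_z i j ij by auto
  qed
  have cz_inj: "inj_on (\<lambda>i. cnj (zz i)) {..<M}"
    using zz_inj by (auto simp: inj_on_def)
  have detG: "Determinant.det (mat M M (\<lambda>(i,j). G $$ (i,j))) \<noteq> 0"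
  proof -
    have "mat M M (\<lambda>(i,j). G $$ (i,j)) = mat M M (\<lambda>(i,j). (\<lambda>_. 1) j * zx j ^ (i+1))"
    proof (rule eq_matI)
      fix i j assume "i < dim_row (mat M M (\<lambda>(i,j). (\<lambda>_. 1::complex) j * zx j ^ (i+1)))"
        "j < dim_col (mat M M (\<lambda>(i,j). (\<lambda>_. 1::complex) j * zx j ^ (i+1)))"
      hence ij: "i < M" "j < M" by auto
      have "G $$ (i,j) = A1 $$ (i,j)" unfolding G_def append_rows_def
        using ij MN A1c Phc adj_carrier[OF Psc] by simp
      thus "mat M M (\<lambda>(i,j). G $$ (i,j)) $$ (i,j) = mat M M (\<lambda>(i,j). (\<lambda>_. 1::complex) j * zx j ^ (i+1)) $$ (i,j)"
        using ij MN A1E by simp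
    qed auto
    thus ?thesis using vandermonde_det_nz[OF zx_inj zx_nz, of "\<lambda>_. 1"] by simp
  qed
  have detQ: "Determinant.det (mat M M (\<lambda>(i,j). Q $$ (i,j))) \<noteq> 0"
  proof -
    define V where "V = mat M M (\<lambda>(i,j). Dw j * (\<lambda>i. cnj (zz i)) j ^ (i+1))"
    have Vc: "V \<in> carrier_mat M M" by (simp add: V_def)
    have "mat M M (\<lambda>(i,j). Q $$ (i,j)) = transpose_mat V"
      by (rule eq_matI) (use MN in \<open>auto simp: V_def Q_def\<close>)
    thus ?thesis using det_transpose[OF Vc] vandermonde_det_nz[OF cz_inj cz_nz Dw_nz] by (simp add: V_def)
  qed
  have dimR: "dim_row (G * Q) = (N-1) + ((N-1) + (N-1))" using Gc by simp
  obtain T where T: "T \<in> carrier_mat M M" "invertible_mat T" "U1 = G * T"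
    using svd_colspace[OF Gc Qc refl MN _ detG detQ svd U1eq[unfolded dimR]] by auto
  show ?thesis unfolding Let_def Ax_def[symmetric] A1_def[symmetric] Ph_def[symmetric] Ps_def[symmetric]
    G_def[symmetric] using T by blast
qed

end
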